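(* Let $q\geq 3$ be odd, $x\in(0,1)$, and $\varepsilon>0$ with $V_\varepsilon:=(x-\varepsilon/2,x+\varepsilon/2)\subseteq(0,1)$. (i) For all $n\in\mathbb{N}$ and all $h\in W_{q,n}$, \[ \Big|\frac{m(h.V_\varepsilon)}{\mu(V_\varepsilon)}-x|h'(x)|\Big|\leq\Big(\Big|\frac{\varepsilon}{\mu(V_\varepsilon)}-x\Big|+\frac{\varepsilon}{x}\Big)\frac{m(h.V_\varepsilon)}{\varepsilon}. \] (ii) There exists $M>0$ (depending only on $x$, $\varepsilon$, $q$) such that for all $y\in(0,1]$, all $n\in\mathbb{N}$ and all $h\in W_{q,n}$ with $y\in h.V_\varepsilon$, \[ \Big|\frac{m(h.V_\varepsilon\cap(0,y])}{\mu(V_\varepsilon)}-x|h'(x)|\,\delta_{h.x}((0,y])\Big|\leq\frac{M}{n^2}. \]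
   Context: Let $\lambda=2\cos(\pi/q)$. Elements of $\mathrm{PGL}_2(\mathbb{R})$ are written as matrices (up to nonzero scalar) and act on $\mathbb{R}\cup\{\infty\}$ by $\begin{bmatrix}a&b\\c&d\end{bmatrix}.x=(ax+b)/(cx+d)$. Put $s(x)=\sin(x\pi/q)/\sin(\pi/q)$, $g_k=\begin{bmatrix}s(k)&-s(k+1)\\-s(k-1)&s(k)\end{bmatrix}$, $Q=\begin{bmatrix}0&1\\1&0\end{bmatrix}$, $K=\{(q+1)/2,\dots,q-1\}$, $\Lambda_q=\{g_k^{-1},(Qg_k)^{-1}:k\in K\}$; $W_{q,n}$ denotes the set of words of length $n$ over $\Lambda_q$ (products of $n$ elements of $\Lambda_q$ in the free semigroup they generate). For $h\in\mathrm{PGL}_2(\mathbb{R})$, $h'$ is the derivative of $x\mapsto h.x$, and $h.V$ is the image of a set $V$. $m$ is Lebesgue measure, $\mu$ the measure with density $1/t$ with respect to $m$ (so $\mu(V_\varepsilon)=\log\frac{x+\varepsilon/2}{x-\varepsilon/2}$), and $\delta_z$ the Dirac measure at $z$. *)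

theory Defs
  imports "HOL-Analysis.Analysis"
begin

text \<open>2x2 real matrices (representatives of elements of PGL_2(R)).\<close>
definition mat2 :: "real \<Rightarrow> real \<Rightarrow> real \<Rightarrow> real \<Rightarrow> real^2^2" where
  "mat2 a b c d = vector [vector [a, b], vector [c, d]]"

definition mob :: "real^2^2 \<Rightarrow> real \<Rightarrow> real" where
  "mob A t = (A$1$1 * t + A$1$2) / (A$2$1 * t + A$2$2)"

definition sq :: "nat \<Rightarrow> real \<Rightarrow> real" where
  "sq q t = sin (t * pi / real q) / sin (pi / real q)"

definition gk :: "nat \<Rightarrow> nat \<Rightarrow> real^2^2" where
  "gk q k = mat2 (sq q (real k)) (- sq q (real k + 1)) (- sq q (real k - 1)) (sq q (real k))"

definition Qm :: "real^2^2" where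
  "Qm = mat2 0 1 1 0"

definition Kset :: "nat \<Rightarrow> nat set" where
  "Kset q = {(q + 1) div 2 .. q - 1}"

definition Lambda_q :: "nat \<Rightarrow> (real^2^2) set" where
  "Lambda_q q = {matrix_inv (gk q k) | k. k \<in> Kset q} \<union> {matrix_inv (Qm ** gk q k) | k. k \<in> Kset q}"

definition W :: "nat \<Rightarrow> nat \<Rightarrow> (real^2^2) set" where
  "W q n = {foldr (**) ws (mat 1) | ws. length ws = n \<and> set ws \<subseteq> Lambda_q q}"

definition mu :: "real measure" where
  "mu = density lborel (\<lambda>t. ennreal (indicator {0<..} t / t))"

end

theory Submission
  imports Defs
begin

lemma mat2_nth[simp]: "mat2 a b c d $ 1 $ 1 = a" "mat2 a b c d $ 1 $ 2 = b"
  "mat2 a b c d $ 2 $ 1 = c" "mat2 a b c d $ 2 $ 2 = d"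
  by (simp_all add: mat2_def)

lemma mat2_ext: "(A::real^2^2) = mat2 (A$1$1) (A$1$2) (A$2$1) (A$2$2)"
  by (simp add: vec_eq_iff forall_2)

lemma mat2_mult: "mat2 a b c d ** mat2 a' b' c' d' = mat2 (a*a'+b*c') (a*b'+b*d') (c*a'+d*c') (c*b'+d*d')"
  by (simp add: vec_eq_iff forall_2 matrix_matrix_mult_def sum_2)

lemma mat1_mat2: "(mat 1 :: real^2^2) = mat2 1 0 0 1"
  by (simp add: vec_eq_iff forall_2 mat_def)

lemma matrix_inv_eqI:
  fixes A B :: "real^2^2"
  assumes "A ** B = mat 1" "B ** A = mat 1"
  shows "matrix_inv A = B"
proof -
  have ex: "\<exists>A'. A ** A' = mat 1 \<and> A' ** A = mat 1" using assms by blast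
  define C where "C = matrix_inv A"
  have C: "A ** C = mat 1 \<and> C ** A = mat 1"
    unfolding C_def matrix_inv_def by (rule someI_ex[OF ex])
  have "C = C ** (A ** B)" using assms by (simp add: matrix_mul_rid)
  also have "\<dots> = (C ** A) ** B" by (simp add: matrix_mul_assoc)
  also have "\<dots> = B" using C by (simp add: matrix_mul_lid)
  finally show ?thesis unfolding C_def .
qed

lemma inv_mat2:
  assumes "a*d - b*c = D" "D \<noteq> 0"
  shows "matrix_inv (mat2 a b c d) = mat2 (d/D) (-b/D) (-c/D) (a/D)"
  apply (rule matrix_inv_eqI)
  using assms by (auto simp: mat2_mult mat1_mat2 field_simps)

lemma foldr_mat: "foldr (**) xs (B::real^2^2) = foldr (**) xs (mat 1) ** B"
  by (induction xs) (auto simp: matrix_mul_lid matrix_mul_assoc)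

lemma mob_mat2: "mob (mat2 a b c d) = (\<lambda>t. (a*t+b)/(c*t+d))"
  by (simp add: mob_def fun_eq_iff)

lemma sinpq_pos: "q \<ge> 3 \<Longrightarrow> sin (pi / real q) > 0"
  by (rule sin_gt_zero) (auto simp: field_simps)

lemma sq_nonneg: assumes "q \<ge> 3" "j \<le> q" shows "0 \<le> sq q (real j)"
proof -
  have "0 \<le> sin (real j * pi / real q)"
    using assms by (intro sin_ge_zero) (auto simp: field_simps)
  thus ?thesis using sinpq_pos[OF assms(1)] by (simp add: sq_def)
qed

lemma sq_ge1: assumes "q \<ge> 3" "1 \<le> j" "j \<le> q - 1" shows "1 \<le> sq q (real j)"
proof -
  define th where "th = pi / real q"
  have th: "0 < th" "th \<le> pi/2" using assms(1) by (auto simp: th_def field_simps)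
  have jt: "real j * pi / real q = real j * th" by (simp add: th_def)
  have "sin th \<le> sin (real j * th)"
  proof (cases "real j * th \<le> pi/2")
    case True
    have "1 * th \<le> real j * th" using th assms by (intro mult_right_mono) auto
    hence "th \<le> real j * th" by simp
    thus ?thesis using th True by (intro sin_monotone_2pi_le) auto
  next
    case False
    have q: "real q * th = pi" using assms(1) by (simp add: th_def)
    have e: "real j * th = pi - real (q - j) * th" using assms q by (simp add: of_nat_diff algebra_simps)
    have "1 \<le> q - j" using assms by auto
    hence "1 * th \<le> real (q-j) * th" using th by (intro mult_right_mono) auto
    hence "th \<le> real (q-j) * th" by simp
    moreover have "real (q-j) * th \<le> pi/2" using False e by linarith
    ultimately have "sin th \<le> sin (real (q-j) * th)" using th by (intro sin_monotone_2pi_le) auto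
    thus ?thesis using e by simp
  qed
  moreover have "sq q (real j) = sin (real j * th) / sin th" by (simp add: sq_def th_def)
  moreover have "sin th > 0" using sinpq_pos[OF assms(1)] by (simp add: th_def)
  ultimately show ?thesis by simp
qed

lemma sq_id: assumes "q \<ge> 3" shows "sq q t ^ 2 - sq q (t+1) * sq q (t-1) = 1"
proof -
  define A where "A = t * pi / real q"
  define B where "B = pi / real q"
  have s: "sin B \<noteq> 0" using sinpq_pos[OF assms] by (simp add: B_def)
  have e1: "(t+1) * pi / real q = A + B" "(t-1) * pi / real q = A - B"
    by (simp_all add: A_def B_def add_divide_distrib diff_divide_distrib ring_distribs)
  have "sin (A+B) * sin (A-B) = (sin A * cos B)^2 - (cos A * sin B)^2"
    by (simp add: sin_add sin_diff power2_eq_square algebra_simps)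
  also have "\<dots> = sin A ^ 2 - sin B ^ 2"
    by (simp add: power_mult_distrib cos_squared_eq algebra_simps)
  finally have "sin (A+B) * sin (A-B) = sin A ^ 2 - sin B ^ 2" .
  thus ?thesis using s unfolding sq_def e1 A_def[symmetric] B_def[symmetric]
    by (simp add: field_simps power2_eq_square)
qed

definition good :: "real^2^2 \<Rightarrow> bool" where
  "good w \<longleftrightarrow> (\<exists>a b c d. w = mat2 a b c d \<and> 0\<le>a \<and> 0\<le>b \<and> 1\<le>c \<and> 1\<le>d \<and> 1 \<le> a+b \<and> 2 \<le> c+d \<and> \<bar>a*d-b*c\<bar> = 1)"

lemma Lambda_good: assumes "q \<ge> 3" "w \<in> Lambda_q q" shows "good w"
proof -
  obtain k where k: "k \<in> Kset q" and w: "w = matrix_inv (gk q k) \<or> w = matrix_inv (Qm ** gk q k)"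
    using assms(2) unfolding Lambda_q_def by blast
  have k2: "2 \<le> k" "k \<le> q - 1" using k assms(1) by (auto simp: Kset_def)
  define s0 where "s0 = sq q (real k - 1)"
  define s1 where "s1 = sq q (real k)"
  define s2 where "s2 = sq q (real k + 1)"
  have rk: "real k - 1 = real (k-1)" "real k + 1 = real (k+1)" using k2 by auto
  have b0: "1 \<le> s0" unfolding s0_def rk using k2 assms(1) by (intro sq_ge1) auto
  have b1: "1 \<le> s1" unfolding s1_def using k2 assms(1) by (intro sq_ge1) auto
  have b2: "0 \<le> s2" unfolding s2_def rk using k2 assms(1) by (intro sq_nonneg) auto
  have idt: "s1^2 - s2 * s0 = 1" unfolding s0_def s1_def s2_def by (rule sq_id[OF assms(1)])
  from w show ?thesis
  proof
    assume w: "w = matrix_inv (gk q k)"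
    have "w = mat2 s1 s2 s0 s1" unfolding w gk_def s0_def[symmetric] s1_def[symmetric] s2_def[symmetric]
      by (subst inv_mat2[where D=1]) (use idt in \<open>auto simp: power2_eq_square\<close>)
    moreover have "s1 * s1 - s2* s0 = 1" using idt by (simp add: power2_eq_square)
    hence "\<bar>s1 * s1 - s2* s0\<bar> = 1" by simp
    moreover have "0 \<le> s1 \<and> 0 \<le> s2 \<and> 1 \<le> s0 \<and> 1 \<le> s1 \<and> 1 \<le> s1 + s2 \<and> 2 \<le> s0 + s1" using b0 b1 b2 by simp
    ultimately show ?thesis unfolding good_def by blast
  next
    assume w: "w = matrix_inv (Qm ** gk q k)"
    have QG: "Qm ** gk q k = mat2 (-s0) s1 s1 (-s2)"
      unfolding gk_def Qm_def s0_def[symmetric] s1_def[symmetric] s2_def[symmetric] mat2_mult by simp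
    have "w = matrix_inv (mat2 (-s0) s1 s1 (-s2))" using w QG by (simp only:)
    also have "\<dots> = mat2 s2 s1 s1 s0"
    proof -
      have dq: "(-s0)*(-s2) - s1 * s1 = -1" using idt by (simp add: power2_eq_square mult.commute)
      show ?thesis by (simp add: inv_mat2[OF dq])
    qed
    finally have wq: "w = mat2 s2 s1 s1 s0" .
    have dt: "\<bar>s2* s0 - s1 * s1\<bar> = 1" using idt by (simp add: power2_eq_square mult.commute)
    have "0 \<le> s2 \<and> 0 \<le> s1 \<and> 1 \<le> s1 \<and> 1 \<le> s0 \<and> 1 \<le> s2 + s1 \<and> 2 \<le> s1 + s0" using b0 b1 b2 by simp
    thus ?thesis unfolding good_def using wq dt by blast
  qed
qed

lemma word_inv:
  assumes "\<And>w. w \<in> set ws \<Longrightarrow> good w"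
  shows "\<exists>a b c d. foldr (**) ws (mat 1) = mat2 a b c d \<and> 0 \<le> c \<and> 1 \<le> d \<and> real (length ws) + 1 \<le> c + d \<and> \<bar>a*d-b*c\<bar> = 1"
  using assms
proof (induction ws rule: rev_induct)
  case Nil
  show ?case by (intro exI[of _ 1] exI[of _ 0] exI[of _ 0] exI[of _ 1]) (auto simp: mat1_mat2)
next
  case (snoc w ws)
  obtain a b c d where h: "foldr (**) ws (mat 1) = mat2 a b c d" "0 \<le> c" "1 \<le> d"
    "real (length ws) + 1 \<le> c + d" "\<bar>a*d-b*c\<bar> = 1" using snoc by auto
  obtain a' b' c' d' where w: "w = mat2 a' b' c' d'" "0\<le>a'" "0\<le>b'" "1\<le>c'" "1\<le>d'" "1 \<le> a'+b'" "2 \<le> c'+d'" "\<bar>a'*d'-b'*c'\<bar> = 1"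
    using snoc.prems[of w] unfolding good_def by auto
  have eq: "foldr (**) (ws @ [w]) (mat 1) = mat2 (a*a'+b*c') (a*b'+b*d') (c*a'+d*c') (c*b'+d*d')"
  proof -
    have "foldr (**) (ws @ [w]) (mat 1) = foldr (**) ws w" by simp
    also have "\<dots> = foldr (**) ws (mat 1) ** w" by (rule foldr_mat)
    finally show ?thesis unfolding h(1) w(1) mat2_mult .
  qed
  have 1: "0 \<le> c*a'+d*c'" using h w by simp
  have 2: "1 \<le> c*b'+d*d'" proof -
    have "1 \<le> d*d'" using h w by (metis mult_mono' mult_1 zero_le_one)
    thus ?thesis using h w by (smt (verit) mult_nonneg_nonneg)
  qed
  have "c * 1 \<le> c*(a'+b')" using h w by (intro mult_left_mono) auto
  hence 3: "c*(a'+b') \<ge> c" by simp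
  have "d * 2 \<le> d*(c'+d')" using h w by (intro mult_left_mono) auto
  hence 4: "d*(c'+d') \<ge> 2*d" by simp
  have 5: "(a*a'+b*c')*(c*b'+d*d') - (a*b'+b*d')*(c*a'+d*c') = (a*d-b*c)*(a'*d'-b'*c')"
    by (simp add: algebra_simps)
  have 6: "real (length (ws@[w])) + 1 \<le> (c*a'+d*c') + (c*b'+d*d')"
  proof -
    have "(c*a'+d*c') + (c*b'+d*d') = c*(a'+b') + d*(c'+d')" by (simp add: algebra_simps)
    moreover have "real (length (ws@[w])) = real (length ws) + 1" by simp
    ultimately show ?thesis using 3 4 h by linarith
  qed
  have 7: "\<bar>(a*a'+b*c')*(c*b'+d*d') - (a*b'+b*d')*(c*a'+d*c')\<bar> = 1"
    unfolding 5 abs_mult using h w by simp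
  define A B C D where "A = a*a'+b*c'" and "B = a*b'+b*d'" and "C = c*a'+d*c'" and "D = c*b'+d*d'"
  have "foldr (**) (ws @ [w]) (mat 1) = mat2 A B C D \<and> 0 \<le> C \<and> 1 \<le> D \<and> real (length (ws@[w])) + 1 \<le> C + D \<and> \<bar>A*D-B*C\<bar> = 1"
    unfolding A_def B_def C_def D_def using eq 1 2 6 7 by (intro conjI)
  thus ?case by blast
qed

lemma img_inc:
  fixes f :: "real \<Rightarrow> real"
  assumes "u < v" "continuous_on {u..v} f" "\<And>s t. u \<le> s \<Longrightarrow> s < t \<Longrightarrow> t \<le> v \<Longrightarrow> f s < f t"
  shows "f ` {u<..<v} = {f u<..<f v}"
proof
  show "f ` {u<..<v} \<subseteq> {f u<..<f v}" using assms(3) by fastforce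
  show "{f u<..<f v} \<subseteq> f ` {u<..<v}"
  proof
    fix y assume y: "y \<in> {f u<..<f v}"
    obtain t where t: "u \<le> t" "t \<le> v" "f t = y"
      using IVT'[of f u y v] y assms(1,2) by auto
    have "t \<noteq> u" "t \<noteq> v" using t y by auto
    thus "y \<in> f ` {u<..<v}" using t by force
  qed
qed

lemma img_dec:
  fixes f :: "real \<Rightarrow> real"
  assumes "u < v" "continuous_on {u..v} f" "\<And>s t. u \<le> s \<Longrightarrow> s < t \<Longrightarrow> t \<le> v \<Longrightarrow> f t < f s"
  shows "f ` {u<..<v} = {f v<..<f u}"
proof
  show "f ` {u<..<v} \<subseteq> {f v<..<f u}" using assms(3) by fastforce
  show "{f v<..<f u} \<subseteq> f ` {u<..<v}"
  proof
    fix y assume y: "y \<in> {f v<..<f u}"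
    obtain t where t: "u \<le> t" "t \<le> v" "f t = y"
      using IVT2'[of f v y u] y assms(1,2) by auto
    have "t \<noteq> u" "t \<noteq> v" using t y by auto
    thus "y \<in> f ` {u<..<v}" using t by force
  qed
qed

lemma mob_diff:
  fixes a b c d s t :: real
  assumes "c* s+d \<noteq> 0" "c* t+d \<noteq> 0"
  shows "(a* t+b)/(c* t+d) - (a* s+b)/(c* s+d) = (a* d-b* c)*(t-s)/((c* s+d)*(c* t+d))"
proof -
  have "(a* t+b)/(c* t+d) - (a* s+b)/(c* s+d) = ((a* t+b)*(c* s+d) - (a* s+b)*(c* t+d))/((c* t+d)*(c* s+d))"
    by (rule diff_frac_eq) (use assms in auto)
  also have "(a* t+b)*(c* s+d) - (a* s+b)*(c* t+d) = (a* d-b* c)*(t-s)" by (simp add: algebra_simps)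
  finally show ?thesis by (simp add: mult.commute)
qed

lemma den_pos: "0 \<le> (c::real) \<Longrightarrow> 1 \<le> d \<Longrightarrow> 0 \<le> t \<Longrightarrow> 0 < c* t+d"
  by (smt (verit) mult_nonneg_nonneg)

lemma mob_measure:
  fixes a b c d u v :: real
  assumes c: "0 \<le> c" and d: "1 \<le> d" and D: "\<bar>a* d - b* c\<bar> = 1" and u: "0 \<le> u" and uv: "u < v"
  shows "(\<exists>l r. (\<lambda>t. (a* t+b)/(c* t+d)) ` {u<..<v} = {l<..<r} \<and> l \<le> r) \<and>
    measure lborel ((\<lambda>t. (a* t+b)/(c* t+d)) ` {u<..<v}) = (v-u)/((c* u+d)*(c* v+d))"
proof -
  define f where "f = (\<lambda>t. (a* t+b)/(c* t+d))"
  have pos: "\<And>t. 0 \<le> t \<Longrightarrow> 0 < c* t+d" using c d den_pos by blast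
  have cont: "continuous_on {u..v} f" unfolding f_def
    using pos u by (intro continuous_intros) (auto simp: less_imp_neq[symmetric] dest!: pos)
  have fd: "\<And>s t. 0 \<le> s \<Longrightarrow> 0 \<le> t \<Longrightarrow> f t - f s = (a* d-b* c)*(t-s)/((c* s+d)*(c* t+d))"
    unfolding f_def by (intro mob_diff) (auto dest!: pos)
  have PR: "0 < (c* u+d)*(c* v+d)" using pos u uv by simp
  consider "a* d-b* c = 1" | "a* d-b* c = -1" using D by linarith
  thus ?thesis
  proof cases
    case 1
    have img: "f ` {u<..<v} = {f u<..<f v}"
    proof (rule img_inc[OF uv cont])
      fix s t assume "u \<le> s" "s < t" "t \<le> v"
      moreover have "0 < (c* s+d)*(c* t+d)" using pos \<open>u \<le> s\<close> \<open>s < t\<close> u by simp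
      ultimately have "f t - f s = (t-s)/((c* s+d)*(c* t+d))" "(t-s)/((c* s+d)*(c* t+d)) > 0"
        using fd[of s t] u 1 by (auto intro!: divide_pos_pos)
      thus "f s < f t" by linarith
    qed
    moreover have e: "f v - f u = (v-u)/((c* u+d)*(c* v+d))" using fd[of u v] u uv 1 by simp
    moreover have "f u \<le> f v" using e PR uv by (smt (verit) divide_pos_pos)
    ultimately show ?thesis unfolding f_def[symmetric] using img measure_lborel_Ioo[of "f u" "f v"] by auto
  next
    case 2
    have img: "f ` {u<..<v} = {f v<..<f u}"
    proof (rule img_dec[OF uv cont])
      fix s t assume "u \<le> s" "s < t" "t \<le> v"
      moreover have "0 < (c* s+d)*(c* t+d)" using pos \<open>u \<le> s\<close> \<open>s < t\<close> u by simp
      ultimately have "f t - f s = (s-t)/((c* s+d)*(c* t+d))" "(s-t)/((c* s+d)*(c* t+d)) < 0"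
        using fd[of s t] u 2 by (auto intro!: divide_neg_pos)
      thus "f t < f s" by linarith
    qed
    have e0: "f v - f u = (u-v)/((c* u+d)*(c* v+d))" using fd[of u v] u uv 2 by simp
    moreover have e: "f u - f v = (v-u)/((c* u+d)*(c* v+d))" using e0 by (metis minus_diff_eq minus_divide_left)
    moreover have "f v \<le> f u" using e PR uv by (smt (verit) divide_pos_pos)
    ultimately show ?thesis unfolding f_def[symmetric] using img measure_lborel_Ioo[of "f v" "f u"] by auto
  qed
qed

lemma mob_deriv:
  fixes a b c d x :: real
  assumes "c* x+d \<noteq> 0"
  shows "deriv (\<lambda>t. (a* t+b)/(c* t+d)) x = (a* d-b* c)/(c* x+d)^2"
proof (rule DERIV_imp_deriv)
  show "((\<lambda>t. (a* t+b)/(c* t+d)) has_real_derivative (a* d-b* c)/(c* x+d)^2) (at x)"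
    using assms by (auto intro!: derivative_eq_intros simp: field_simps power2_eq_square)
qed

lemma int_inv:
  assumes "0 < a" "a \<le> b"
  shows "(\<integral>\<^sup>+t. ennreal (1/t) * indicator {a..b} t \<partial>lborel) = ennreal (ln b - ln a)"
proof (rule nn_integral_has_integral_lebesgue')
  show "\<And>x. x \<in> {a..b} \<Longrightarrow> 0 \<le> 1/x" using assms by auto
  have "((\<lambda>t. 1/t) has_integral (ln b - ln a)) {a..b}"
  proof (rule fundamental_theorem_of_calculus)
    show "a \<le> b" by fact
    fix x assume x: "x \<in> {a..b}"
    hence "0 < x" using assms by auto
    thus "(ln has_vector_derivative 1/x) (at x within {a..b})"
      by (auto intro!: derivative_eq_intros simp: has_real_derivative_iff_has_vector_derivative[symmetric])
  qed
  thus "((\<lambda>t. 1/t) has_integral (ln b - ln a)) {a..b}" .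
qed

lemma mu_inf: assumes "0 < v" shows "emeasure mu {0<..<v} = \<infinity>"
proof (rule ccontr)
  define F where "F = (\<lambda>t::real. ennreal (indicator {0<..} t / t))"
  have meas: "F \<in> borel_measurable lborel" unfolding F_def by measurable
  have X: "emeasure mu {0<..<v} = (\<integral>\<^sup>+t. F t * indicator {0<..<v} t \<partial>lborel)"
    unfolding mu_def F_def[symmetric] by (rule emeasure_density[OF meas]) simp
  define w where "w = v/2"
  have w: "0 < w" "w < v" using assms by (auto simp: w_def)
  have low: "ennreal (ln w - ln d) \<le> emeasure mu {0<..<v}" if d: "0 < d" "d \<le> w" for d
  proof -
    have "ennreal (ln w - ln d) = (\<integral>\<^sup>+t. ennreal (1/t) * indicator {d..w} t \<partial>lborel)"
      using int_inv[OF d] by simp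
    also have "\<dots> \<le> (\<integral>\<^sup>+t. F t * indicator {0<..<v} t \<partial>lborel)"
      using d w by (intro nn_integral_mono) (auto simp: F_def indicator_def)
    finally show ?thesis using X by simp
  qed
  assume "emeasure mu {0<..<v} \<noteq> \<infinity>"
  then obtain r where r: "emeasure mu {0<..<v} = ennreal r" "0 \<le> r"
    by (cases "emeasure mu {0<..<v}" rule: ennreal_cases) auto
  define d where "d = w * exp (-(r+1))"
  have d: "0 < d" "d \<le> w" using w r(2) by (auto simp: d_def mult_le_cancel_left1)
  have "ln w - ln d = r + 1" using w by (simp add: d_def ln_mult)
  hence "ennreal (r+1) \<le> ennreal r" using low[OF d] r by simp
  thus False using r by (simp add: ennreal_le_iff)
qed

lemma mu_zero: "0 < v \<Longrightarrow> measure mu {0<..<v} = 0"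
  by (simp add: measure_def mu_inf)

lemma alg1:
  fixes c d x e k :: real
  assumes c: "0 \<le> c" and d: "1 \<le> d" and x: "0 < x" "x < 1" and e: "0 < e" "e \<le> 2 * x"
  defines "P \<equiv> c * (x - e/2) + d" and "R \<equiv> c * (x + e/2) + d" and "X \<equiv> c * x + d"
  shows "\<bar>k / (P * R) - x / X^2\<bar> \<le> (\<bar>k - x\<bar> + e / x) / (P * R)"
proof -
  have P: "0 < P" unfolding P_def using c d e by (intro den_pos) auto
  have R: "0 < R" unfolding R_def using c d e x by (intro den_pos) auto
  have X: "0 < X" unfolding X_def using c d x by (intro den_pos) auto
  have PR: "P * R = X^2 - (c * e / 2)^2" unfolding P_def R_def X_def by (simp add: algebra_simps power2_eq_square)
  have PRp: "0 < P * R" using P R by simp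
  have cx: "(c * x)^2 \<le> X^2" using c x X unfolding X_def using d by (intro power_mono) auto
  have "x^2 * (c * e / 2)^2 = (c * x)^2 * (e^2/4)" by (simp add: power2_eq_square)
  also have "\<dots> \<le> X^2 * (e^2/4)" using cx by (intro mult_right_mono) auto
  also have "\<dots> \<le> X^2 * e"
  proof -
    have "e^2/4 \<le> e" using e x by (simp add: power2_eq_square)
    thus ?thesis by (intro mult_left_mono) auto
  qed
  finally have key: "x^2 * (c * e / 2)^2 \<le> X^2 * e" .
  have d0: "1/(P * R) - 1/X^2 = (1 * X^2 - 1 * (P * R)) / (P * R * X^2)"
    using PRp X by (intro diff_frac_eq) auto
  have d1: "1 * X^2 - 1 * (P * R) = (c * e / 2)^2" using PR by simp
  have diff: "1/(P * R) - 1/X^2 = (c * e / 2)^2 / (P * R * X^2)" using d0 unfolding d1 .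
  have t2: "x * (1/(P * R) - 1/X^2) \<le> (e/x) / (P * R)"
  proof -
    have pos: "0 < x * (P * R * X^2)" using x PRp X by simp
    have "x * (1/(P * R) - 1/X^2) = (x^2 * (c * e / 2)^2) / (x * (P * R * X^2))"
      unfolding diff using x by (simp add: power2_eq_square)
    also have "\<dots> \<le> (X^2 * e) / (x * (P * R * X^2))" using key pos by (intro divide_right_mono) auto
    also have "\<dots> = (e/x) / (P * R)" using X x PRp by (simp add: field_simps power2_eq_square)
    finally show ?thesis .
  qed
  have nn: "0 \<le> x * (1/(P * R) - 1/X^2)" using diff PRp X x by simp
  have "k / (P * R) - x / X^2 = (k - x) / (P * R) + x * (1/(P * R) - 1/X^2)"
    by (simp add: field_simps diff_divide_distrib)
  hence A: "\<bar>k / (P * R) - x / X^2\<bar> \<le> \<bar>(k - x) / (P * R)\<bar> + \<bar>x * (1/(P * R) - 1/X^2)\<bar>"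
    by (metis abs_triangle_ineq)
  have B: "\<bar>(k - x) / (P * R)\<bar> = \<bar>k - x\<bar> / (P * R)" using PRp by (simp add: abs_divide)
  have C: "\<bar>x * (1/(P * R) - 1/X^2)\<bar> = x * (1/(P * R) - 1/X^2)" using nn by simp
  have E: "(\<bar>k - x\<bar> + e / x) / (P * R) = \<bar>k - x\<bar> / (P * R) + (e/x) / (P * R)" by (simp add: add_divide_distrib)
  show ?thesis using A B C E t2 by linarith
qed

lemma alg2:
  fixes m m' mu P R X x n u e ind :: real
  assumes m': "0 \<le> m'" "m' \<le> e / (P * R)" and mu: "0 \<le> mu"
    and pos: "mu > 0 \<Longrightarrow> 0 < u \<and> u * n \<le> P \<and> P \<le> R"
    and x: "0 < x" and X: "x * n \<le> X" and n: "1 \<le> n" and e: "0 < e"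
    and ind: "ind = 0 \<or> ind = 1"
  shows "\<bar>m' / mu - x * (1 / X^2) * ind\<bar> \<le> (e / (u^2 * mu) + 1/x) / n^2"
proof -
  have t1: "\<bar>m' / mu\<bar> \<le> (e / (u^2 * mu)) / n^2"
  proof (cases "mu = 0")
    case True thus ?thesis by simp
  next
    case False
    hence mu: "mu > 0" using mu by simp
    with pos have p: "0 < u" "u * n \<le> P" "P \<le> R" by auto
    have un: "0 < u * n" using p n by simp
    have "(u * n)^2 \<le> P * R"
    proof -
      have "(u * n)^2 \<le> P^2" using un p by (intro power_mono) auto
      also have "\<dots> \<le> P * R" using p un by (simp add: power2_eq_square mult_left_mono)
      finally show ?thesis .
    qed
    moreover have "0 < (u * n)^2" using un by (simp only: zero_less_power2)
    moreover have "0 < P * R * (u * n)^2" using calculation by (smt (verit) mult_pos_pos)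
    ultimately have le: "e / (P * R) \<le> e / (u * n)^2" using e by (intro divide_left_mono) (auto simp del: zero_less_power2)
    have "\<bar>m' / mu\<bar> = m' / mu" using m' mu by simp
    also have "\<dots> \<le> (e / (u * n)^2) / mu" using m' le mu by (intro divide_right_mono) auto
    also have "\<dots> = (e / (u^2 * mu)) / n^2" by (simp add: power_mult_distrib field_simps)
    finally show ?thesis .
  qed
  have xn: "0 < x * n" using x n by simp
  have t2: "\<bar>x * (1 / X^2) * ind\<bar> \<le> (1/x) / n^2"
  proof -
    have "(x * n)^2 \<le> X^2" using xn X by (intro power_mono) auto
    moreover have "0 < (x * n)^2" using xn by (simp only: zero_less_power2)
    moreover have "0 < X^2 * (x * n)^2" using calculation by (smt (verit) mult_pos_pos)
    ultimately have "x / X^2 \<le> x / (x * n)^2" using x by (intro divide_left_mono) (auto simp del: zero_less_power2)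
    also have "\<dots> = (1/x) / n^2" using x by (simp add: power2_eq_square field_simps)
    finally have "x / X^2 \<le> (1/x) / n^2" .
    moreover have "0 \<le> x / X^2" using x by simp
    moreover have "0 \<le> (1/x) / n^2" using x by simp
    ultimately show ?thesis using ind by (auto simp del: divide_divide_eq_left)
  qed
  have "\<bar>m' / mu - x * (1 / X^2) * ind\<bar> \<le> \<bar>m' / mu\<bar> + \<bar>x * (1 / X^2) * ind\<bar>" by (rule abs_triangle_ineq4)
  also have "\<dots> \<le> (e / (u^2 * mu)) / n^2 + (1/x) / n^2" using t1 t2 by simp
  finally show ?thesis by (simp add: add_divide_distrib)
qed

theorem lemma4p6:
  fixes q :: nat and x \<epsilon> :: real
  assumes "odd q" and "q \<ge> 3"
    and "0 < x" and "x < 1" and "\<epsilon> > 0"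
    and "{x - \<epsilon>/2 <..< x + \<epsilon>/2} \<subseteq> {0<..<1}"
  shows "(\<forall>n \<ge> 1. \<forall>h \<in> W q n.
            \<bar>measure lborel (mob h ` {x - \<epsilon>/2 <..< x + \<epsilon>/2}) / measure mu {x - \<epsilon>/2 <..< x + \<epsilon>/2}
              - x * \<bar>deriv (mob h) x\<bar>\<bar>
            \<le> (\<bar>\<epsilon> / measure mu {x - \<epsilon>/2 <..< x + \<epsilon>/2} - x\<bar> + \<epsilon> / x)
               * measure lborel (mob h ` {x - \<epsilon>/2 <..< x + \<epsilon>/2}) / \<epsilon>)
       \<and> (\<exists>M > 0. \<forall>y \<in> {0<..1}. \<forall>n \<ge> 1. \<forall>h \<in> W q n.
            y \<in> mob h ` {x - \<epsilon>/2 <..< x + \<epsilon>/2} \<longrightarrow>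
            \<bar>measure lborel (mob h ` {x - \<epsilon>/2 <..< x + \<epsilon>/2} \<inter> {0<..y}) / measure mu {x - \<epsilon>/2 <..< x + \<epsilon>/2}
              - x * \<bar>deriv (mob h) x\<bar> * indicator {0<..y} (mob h x)\<bar>
            \<le> M / (real n)^2)"
proof -
  define u where "u = x - \<epsilon>/2"
  define v where "v = x + \<epsilon>/2"
  have sub: "{u<..<v} \<subseteq> {0<..<1}" using assms(6) unfolding u_def v_def .
  have uv: "u < v" "v - u = \<epsilon>" using assms(5) by (auto simp: u_def v_def)
  have v0: "0 < v" using assms(3,5) by (simp add: v_def)
  have u0: "0 \<le> u"
  proof (rule ccontr)
    assume nu: "\<not> 0 \<le> u"
    hence "u/2 \<in> {u<..<v}" using v0 by auto
    hence "u/2 \<in> {0<..<1}" using sub by blast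
    thus False using nu by simp
  qed
  have v1: "v \<le> 1"
  proof (rule ccontr)
    assume nv: "\<not> v \<le> 1"
    have "u < 1" using assms(4,5) by (simp add: u_def)
    hence "(1+v)/2 \<in> {u<..<v}" using nv by auto
    hence "(1+v)/2 \<in> {0<..<1}" using sub by blast
    thus False using nv by simp
  qed
  have e2x: "\<epsilon> \<le> 2 * x" using u0 by (simp add: u_def)
  define \<mu> where "\<mu> = measure mu {u<..<v}"
  have \<mu>0: "0 \<le> \<mu>" unfolding \<mu>_def by simp
  have \<mu>pos: "0 < u" if "0 < \<mu>"
  proof (rule ccontr)
    assume "\<not> 0 < u"
    hence "u = 0" using u0 by simp
    hence "\<mu> = 0" unfolding \<mu>_def using mu_zero[OF v0] by simp
    thus False using that by simp
  qed
  have key: "\<exists>a b c d. h = mat2 a b c d \<and> 0 \<le> c \<and> 1 \<le> d \<and> real n + 1 \<le> c + d \<and> \<bar>a* d-b* c\<bar> = 1"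
    if hw: "h \<in> W q n" for h n
  proof -
    obtain ws where ws: "h = foldr (**) ws (mat 1)" "length ws = n" "set ws \<subseteq> Lambda_q q"
      using hw unfolding W_def by blast
    have "\<And>w. w \<in> set ws \<Longrightarrow> good w" using ws(3) Lambda_good[OF assms(2)] by blast
    from word_inv[OF this] show ?thesis using ws by auto
  qed
  have facts: "\<exists>a b c d. mob h = (\<lambda>t. (a* t+b)/(c* t+d)) \<and> 0 \<le> c \<and> 1 \<le> d \<and> real n + 1 \<le> c + d
     \<and> \<bar>deriv (mob h) x\<bar> = 1 / (c* x+d)^2
     \<and> (\<exists>l r. mob h ` {u<..<v} = {l<..<r} \<and> l \<le> r)
     \<and> measure lborel (mob h ` {u<..<v}) = \<epsilon> / ((c*(x - \<epsilon>/2)+d)*(c*(x + \<epsilon>/2)+d))"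
    if hw: "h \<in> W q n" for h n
  proof -
    obtain a b c d where h: "h = mat2 a b c d" "0 \<le> c" "1 \<le> d" "real n + 1 \<le> c + d" "\<bar>a* d-b* c\<bar> = 1"
      using key[OF hw] by blast
    have mh: "mob h = (\<lambda>t. (a* t+b)/(c* t+d))" using h(1) by (simp add: mob_mat2)
    have X: "0 < c* x+d" using h assms(3) by (intro den_pos) auto
    have "deriv (mob h) x = (a* d-b* c)/(c* x+d)^2" unfolding mh using X by (intro mob_deriv) simp
    hence dv: "\<bar>deriv (mob h) x\<bar> = 1 / (c* x+d)^2" using h(5) X by (simp add: abs_divide)
    have mm: "(\<exists>l r. mob h ` {u<..<v} = {l<..<r} \<and> l \<le> r) \<and>
        measure lborel (mob h ` {u<..<v}) = (v-u)/((c* u+d)*(c* v+d))"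
      unfolding mh using mob_measure[OF h(2,3,5) u0 uv(1)] by simp
    have "measure lborel (mob h ` {u<..<v}) = (v-u)/((c * u+d)*(c * v+d))" using mm by blast
    also have "\<dots> = \<epsilon> / ((c*(x - \<epsilon>/2)+d)*(c*(x + \<epsilon>/2)+d))" by (simp add: u_def v_def)
    finally have meq: "measure lborel (mob h ` {u<..<v}) = \<epsilon> / ((c*(x - \<epsilon>/2)+d)*(c*(x + \<epsilon>/2)+d))" .
    have "0 \<le> c \<and> 1 \<le> d \<and> real n + 1 \<le> c + d" using h by simp
    thus ?thesis using mh dv mm meq by blast
  qed
  show ?thesis
  proof (intro conjI allI impI ballI)
    fix n h assume n: "1 \<le> n" and hW: "h \<in> W q n"
    obtain a b c d where f: "mob h = (\<lambda>t. (a* t+b)/(c* t+d))" "0 \<le> c" "1 \<le> d" "real n + 1 \<le> c + d"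
       "\<bar>deriv (mob h) x\<bar> = 1 / (c* x+d)^2"
       "measure lborel (mob h ` {u<..<v}) = \<epsilon> / ((c*(x - \<epsilon>/2)+d)*(c*(x + \<epsilon>/2)+d))"
      using facts[OF hW] by blast
    define P where "P = c*(x - \<epsilon>/2)+d"
    define R where "R = c*(x + \<epsilon>/2)+d"
    have A: "\<bar>(\<epsilon>/\<mu>) / (P * R) - x / (c* x+d)^2\<bar> \<le> (\<bar>\<epsilon>/\<mu> - x\<bar> + \<epsilon> / x) / (P * R)"
      unfolding P_def R_def using alg1[OF f(2,3) assms(3,4,5) e2x] by blast
    have m1: "(\<epsilon> / (P * R)) / \<mu> = (\<epsilon>/\<mu>) / (P * R)" by simp
    have L1: "measure lborel (mob h ` {x - \<epsilon>/2 <..< x + \<epsilon>/2}) = \<epsilon> / (P * R)"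
      using f(6) by (simp add: u_def v_def P_def R_def)
    have L2: "measure mu {x - \<epsilon>/2 <..< x + \<epsilon>/2} = \<mu>" by (simp add: \<mu>_def u_def v_def)
    have m2: "(\<bar>\<epsilon>/\<mu> - x\<bar> + \<epsilon> / x) * (\<epsilon> / (P * R)) / \<epsilon> = (\<bar>\<epsilon>/\<mu> - x\<bar> + \<epsilon> / x) / (P * R)"
      using assms(5) by simp
    show "\<bar>measure lborel (mob h ` {x - \<epsilon>/2 <..< x + \<epsilon>/2}) / measure mu {x - \<epsilon>/2 <..< x + \<epsilon>/2}
              - x * \<bar>deriv (mob h) x\<bar>\<bar>
            \<le> (\<bar>\<epsilon> / measure mu {x - \<epsilon>/2 <..< x + \<epsilon>/2} - x\<bar> + \<epsilon> / x)
               * measure lborel (mob h ` {x - \<epsilon>/2 <..< x + \<epsilon>/2}) / \<epsilon>"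
      unfolding L1 L2 f(5) m1 m2 using A by simp
  next
    show "\<exists>M > 0. \<forall>y \<in> {0<..1}. \<forall>n \<ge> 1. \<forall>h \<in> W q n.
            y \<in> mob h ` {x - \<epsilon>/2 <..< x + \<epsilon>/2} \<longrightarrow>
            \<bar>measure lborel (mob h ` {x - \<epsilon>/2 <..< x + \<epsilon>/2} \<inter> {0<..y}) / measure mu {x - \<epsilon>/2 <..< x + \<epsilon>/2}
              - x * \<bar>deriv (mob h) x\<bar> * indicator {0<..y} (mob h x)\<bar>
            \<le> M / (real n)^2"
    proof (intro exI[of _ "\<epsilon> / (u^2 * \<mu>) + 1/x"] conjI ballI allI impI)
      show "0 < \<epsilon> / (u^2 * \<mu>) + 1/x" using assms(3,5) \<mu>0
        by (smt (verit) divide_nonneg_nonneg mult_nonneg_nonneg zero_le_power2 divide_pos_pos)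
      fix y n h assume n: "1 \<le> n" and hW: "h \<in> W q n"
      obtain a b c d where f: "mob h = (\<lambda>t. (a* t+b)/(c* t+d))" "0 \<le> c" "1 \<le> d" "real n + 1 \<le> c + d"
         "\<bar>deriv (mob h) x\<bar> = 1 / (c* x+d)^2"
         "\<exists>l r. mob h ` {u<..<v} = {l<..<r} \<and> l \<le> r"
         "measure lborel (mob h ` {u<..<v}) = \<epsilon> / ((c*(x - \<epsilon>/2)+d)*(c*(x + \<epsilon>/2)+d))"
        using facts[OF hW] by blast
      obtain l r where lr: "mob h ` {u<..<v} = {l<..<r}" "l \<le> r" using f(6) by blast
      define P where "P = c*(x - \<epsilon>/2)+d"
      define R where "R = c*(x + \<epsilon>/2)+d"
      define m' where "m' = measure lborel (mob h ` {u<..<v} \<inter> {0<..y})"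
      have m'0: "0 \<le> m'" unfolding m'_def by simp
      have "m' \<le> measure lborel (mob h ` {u<..<v})" unfolding m'_def lr
        by (rule measure_mono_fmeasurable) (auto simp: fmeasurable_def lr)
      hence m'1: "m' \<le> \<epsilon> / (P * R)" using f(7) by (simp add: P_def R_def)
      have un: "u * real n \<le> P" if "0 < \<mu>"
      proof -
        have "u * real n \<le> u * (c + d)" using u0 f(4) by (intro mult_left_mono) auto
        also have "\<dots> = c * u + d * u" by (simp add: algebra_simps)
        also have "d * u \<le> d" using f(3) v1 uv(1) by (simp add: mult_le_cancel_left1)
        finally show ?thesis by (simp add: P_def u_def)
      qed
      have PR: "P \<le> R" using f(2) assms(5) by (simp add: P_def R_def mult_left_mono)
      have Xn: "x * real n \<le> c* x+d"
      proof -
        have "x * real n \<le> x * (c + d)" using assms(3) f(4) by (intro mult_left_mono) auto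
        also have "\<dots> = c * x + d * x" by (simp add: algebra_simps)
        also have "d * x \<le> d" using f(3) assms(4) by (simp add: mult_le_cancel_left1)
        finally show ?thesis by simp
      qed
      have ind: "indicator {0<..y} (mob h x) = (0::real) \<or> indicator {0<..y} (mob h x) = (1::real)"
        by (simp add: indicator_def)
      have B: "\<bar>m' / \<mu> - x * (1 / (c* x+d)^2) * indicator {0<..y} (mob h x)\<bar> \<le> (\<epsilon> / (u^2 * \<mu>) + 1/x) / (real n)^2"
        using m'0 m'1 \<mu>0 \<mu>pos un PR assms(3) Xn n assms(5) ind
        by (intro alg2) auto
      show "\<bar>measure lborel (mob h ` {x - \<epsilon>/2 <..< x + \<epsilon>/2} \<inter> {0<..y}) / measure mu {x - \<epsilon>/2 <..< x + \<epsilon>/2}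
              - x * \<bar>deriv (mob h) x\<bar> * indicator {0<..y} (mob h x)\<bar>
            \<le> (\<epsilon> / (u^2 * \<mu>) + 1/x) / (real n)^2"
        unfolding u_def[symmetric] v_def[symmetric] \<mu>_def[symmetric] m'_def[symmetric] f(5) using B .
    qed
  qed
qed

end
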